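(* Let $A_N^*$ be the event of Lemma 2.2 (an event in $\mathcal F^+_{\tau_N}$ with $\mathbb P[(A_N^* )^c]=O(N^{-1/8})$ on which $\sup_{x\ge0}|G_N(x)-G(x)|\le\varepsilon_N$ for a deterministic $\varepsilon_N=O(N^{-1/6})$). Suppose $G$ satisfies Assumption 2. If $b<\infty$, then there is a deterministic sequence $r_N\to0$ such that on $A_N^*$, $\sup_{0\le u\le1}|G_N^{-1}(u)-G^{-1}(u)|\le r_N$. If $b=\infty$, then there exist $\alpha>0$, deterministic $x_N$ with $N^{-\alpha}x_N$ bounded below as $N\to\infty$, and deterministic $r_N\to0$ such that on $A_N^*$, $\sup_{u:\,G^{-1}(u)\le x_N}|G_N^{-1}(u)-G^{-1}(u)|\le r_N$.
   Context: Assumption 2: the probability distribution function $G$ on $(0,\infty)$ is non-lattice with finite second moment; its support is an open interval $(a,b)$ ($0\le a<b\le\infty$), and $G(A)\ge\int_Ag(x)\,dx$ for all $A\subset(a,b)$ for some continuous positive density $g$ on $(a,b)$; if $b=\infty$ then also $g(x)\ge kx^{-\gamma}$ for all $x\ge x_0$, for some $x_0>a$, $k>0$, $\gamma>3$. $G_N$ is a (random) distribution function (in the paper: the empirical distribution of the points of the reproduction point processes of the individuals not yet infected at time $\tau_N$, measurable w.r.t. the $\sigma$-field $\mathcal F^+_{\tau_N}$). $G^{-1}$, $G_N^{-1}$ denote generalized inverses. *)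

theory Defs
  imports "HOL-Probability.Probability" "HOL-Library.Landau_Symbols"
begin

definition is_distribution_function :: "(real \<Rightarrow> real) \<Rightarrow> bool" where
  "is_distribution_function F \<longleftrightarrow>
     mono F \<and> (\<forall>x. continuous (at_right x) F) \<and>
     (F \<longlongrightarrow> 0) at_bot \<and> (F \<longlongrightarrow> 1) at_top"

definition gen_inv :: "(real \<Rightarrow> real) \<Rightarrow> real \<Rightarrow> real" where
  "gen_inv F u = Inf {x. 0 \<le> x \<and> u \<le> F x}"

definition lattice_distribution :: "real measure \<Rightarrow> bool" where
  "lattice_distribution \<mu> \<longleftrightarrow> (\<exists>d>0. AE x in \<mu>. \<exists>k::int. x = of_int k * d)"

definition assumption2 :: "real measure \<Rightarrow> real \<Rightarrow> ereal \<Rightarrow> bool" where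
  "assumption2 \<mu> a b \<longleftrightarrow>
     prob_space \<mu> \<and> sets \<mu> = sets borel \<and>
     measure \<mu> {..0} = 0 \<and>
     \<not> lattice_distribution \<mu> \<and>
     integrable \<mu> (\<lambda>x. x ^ 2) \<and>
     0 \<le> a \<and> ereal a < b \<and>
     measure \<mu> (- {x. a < x \<and> ereal x < b}) = 0 \<and>
     (\<exists>g :: real \<Rightarrow> real.
        continuous_on {x. a < x \<and> ereal x < b} g \<and>
        (\<forall>x. a < x \<and> ereal x < b \<longrightarrow> g x > 0) \<and>
        (\<forall>A \<in> sets borel. A \<subseteq> {x. a < x \<and> ereal x < b} \<longrightarrow>
            emeasure \<mu> A \<ge> (\<integral>\<^sup>+ x \<in> A. ennreal (g x) \<partial>lborel)) \<and>
        (b = \<infinity> \<longrightarrow> (\<exists>x0 k \<gamma>. x0 > a \<and> k > 0 \<and> \<gamma> > 3 \<and>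
            (\<forall>x \<ge> x0. g x \<ge> k * x powr (-\<gamma>)))))"

end

theory Submission
  imports Defs
begin

schematic_goal main_lemma:
  fixes \<mu> :: "real measure" and a :: real and b :: ereal and eps :: "nat \<Rightarrow> real"
  shows "assumption2 \<mu> a b \<Longrightarrow> eps \<in> O(\<lambda>N. real N powr (-1/6)) \<Longrightarrow> ((b \<noteq> \<infinity> \<longrightarrow>
           (\<exists>r :: nat \<Rightarrow> real. r \<longlonglongrightarrow> 0 \<and>
              (\<forall>N F. is_distribution_function F \<and> (\<forall>x \<le> a. F x = 0) \<and>
                     (\<forall>x \<ge> real_of_ereal b. F x = 1) \<and>
                     (\<forall>x \<ge> 0. \<bar>F x - measure \<mu> {..x}\<bar> \<le> eps N) \<longrightarrow>
                 (\<forall>u \<in> {0..1}. \<bar>gen_inv F u - gen_inv (\<lambda>x. measure \<mu> {..x}) u\<bar> \<le> r N))))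
       \<and> (b = \<infinity> \<longrightarrow>
           (\<exists>\<alpha> > 0. \<exists>(xN :: nat \<Rightarrow> real) (r :: nat \<Rightarrow> real).
              (\<exists>c > 0. eventually (\<lambda>N. real N powr (-\<alpha>) * xN N \<ge> c) sequentially) \<and>
              r \<longlonglongrightarrow> 0 \<and>
              (\<forall>N F. is_distribution_function F \<and> (\<forall>x \<le> a. F x = 0) \<and>
                     (\<forall>x \<ge> 0. \<bar>F x - measure \<mu> {..x}\<bar> \<le> eps N) \<longrightarrow>
                 (\<forall>u. 0 \<le> u \<and> u < 1 \<and> gen_inv (\<lambda>x. measure \<mu> {..x}) u \<le> xN N \<longrightarrow>
                     \<bar>gen_inv F u - gen_inv (\<lambda>x. measure \<mu> {..x}) u\<bar> \<le> r N))))) \<and> (?t::nat) = ?t"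
proof -
  have core: "\<bar>gen_inv F u - gen_inv G u\<bar> \<le> \<delta>"
    if u: "0 < u" and d: "0 < \<delta>"
      and G0: "\<forall>x\<le>a. G x = 0" and F0: "\<forall>x\<le>a. F x = 0"
      and incr: "\<forall>x. a \<le> x \<longrightarrow> x + \<delta>/2 \<le> L \<longrightarrow> G x + m \<le> G (x + \<delta>/2)"
      and close: "\<forall>x\<ge>0. \<bar>F x - G x\<bar> \<le> \<eta>" and em: "\<eta> \<le> m"
      and ne: "{x. 0 \<le> x \<and> u \<le> G x} \<noteq> {}"
      and x0L: "gen_inv G u \<le> L"
      and top: "gen_inv G u + \<delta> \<le> L \<or> (\<forall>x\<ge>L. u \<le> F x)"
    for F G :: "real \<Rightarrow> real" and u \<delta> a L m \<eta> :: real
  proof -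
    define SG where "SG = {x. 0 \<le> x \<and> u \<le> G x}"
    define SF where "SF = {x. 0 \<le> x \<and> u \<le> F x}"
    define x0 where "x0 = gen_inv G u"
    have x0: "x0 = Inf SG" unfolding x0_def SG_def gen_inv_def by simp
    have bG: "bdd_below SG" unfolding SG_def by (rule bdd_belowI[of _ 0]) auto
    have bF: "bdd_below SF" unfolding SF_def by (rule bdd_belowI[of _ 0]) auto
    have neG: "SG \<noteq> {}" using ne SG_def by simp
    have x0ge: "x0 \<ge> 0" unfolding x0 by (rule cInf_greatest[OF neG]) (auto simp: SG_def)
    have lowG: "\<And>y. y \<in> SG \<Longrightarrow> x0 \<le> y" unfolding x0 by (rule cInf_lower[OF _ bG])
    obtain z' where z': "z' \<in> SG" "z' < x0 + \<delta>/2"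
      using cInf_lessD[OF neG, of "x0 + \<delta>/2"] d x0 by auto
    have z'a: "z' > a"
    proof (rule ccontr)
      assume "\<not> z' > a" then have "G z' = 0" using G0 by auto
      with z' u show False by (auto simp: SG_def)
    qed
    have "\<exists>z\<in>SF. z \<le> x0 + \<delta>"
    proof (cases "z' + \<delta>/2 \<le> L")
      case True
      have "G z' + m \<le> G (z' + \<delta>/2)" using incr z'a True by auto
      moreover have "\<bar>F (z' + \<delta>/2) - G (z' + \<delta>/2)\<bar> \<le> \<eta>"
        using close z' d by (auto simp: SG_def)
      ultimately have "u \<le> F (z' + \<delta>/2)" using z' em by (auto simp: SG_def)
      then have "z' + \<delta>/2 \<in> SF" using z' d by (auto simp: SF_def SG_def)
      then show ?thesis using z' by (intro bexI[of _ "z' + \<delta>/2"]) auto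
    next
      case False
      then have "\<forall>x\<ge>L. u \<le> F x" using top z' x0_def by auto
      then have "L \<in> SF" using x0L x0ge x0_def by (auto simp: SF_def)
      then show ?thesis using False z' by (intro bexI[of _ L]) auto
    qed
    then obtain z where z: "z \<in> SF" "z \<le> x0 + \<delta>" by blast
    have neF: "SF \<noteq> {}" using z by auto
    have up: "Inf SF \<le> x0 + \<delta>" using cInf_lower[OF z(1) bF] z by simp
    have lo: "x0 - \<delta> \<le> Inf SF"
    proof (rule cInf_greatest[OF neF])
      fix x assume x: "x \<in> SF"
      show "x0 - \<delta> \<le> x"
      proof (rule ccontr)
        assume "\<not> x0 - \<delta> \<le> x"
        then have xl: "x < x0 - \<delta>" by simp
        have xa: "x > a"
        proof (rule ccontr)
          assume "\<not> x > a" then have "F x = 0" using F0 by auto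
          with x u show False by (auto simp: SF_def)
        qed
        have "G x + m \<le> G (x + \<delta>/2)" using incr xa xl x0L x0_def d by auto
        moreover have "G (x + \<delta>/2) < u"
        proof (rule ccontr)
          assume "\<not> G (x + \<delta>/2) < u"
          then have "x + \<delta>/2 \<in> SG" using x d by (auto simp: SG_def SF_def)
          then have "x0 \<le> x + \<delta>/2" by (rule lowG)
          with xl d show False by simp
        qed
        moreover have "\<bar>F x - G x\<bar> \<le> \<eta>" using close x by (auto simp: SF_def)
        ultimately show False using x em by (auto simp: SF_def)
      qed
    qed
    have "gen_inv F u = Inf SF" unfolding gen_inv_def SF_def by simp
    then show ?thesis using up lo x0_def by simp
  qed



  note core = core[rule_format (no_asm)]

  have incr_meas: "measure \<mu> {..s} + c*(t-s) \<le> measure \<mu> {..t}"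
    if P: "prob_space \<mu>" and S: "sets \<mu> = sets borel"
      and h: "\<forall>A \<in> sets borel. A \<subseteq> {x. a < x \<and> ereal x < b} \<longrightarrow>
              emeasure \<mu> A \<ge> (\<integral>\<^sup>+ x \<in> A. ennreal (g x) \<partial>lborel)"
      and st: "a < s" "s \<le> t" "ereal t < b" and c: "\<forall>y\<in>{s..t}. c \<le> g y" "0 \<le> c"
    for \<mu> :: "real measure" and a s t c :: real and b :: ereal and g :: "real \<Rightarrow> real"
  proof (cases "s = t")
    case True then show ?thesis by simp
  next
    case False
    then have st': "s < t" using st by simp
    have rd: "real_distribution \<mu>" using P S by (simp add: real_distribution_def real_distribution_axioms_def)
    have fbm: "finite_borel_measure \<mu>" by (rule real_distribution.finite_borel_measure_M[OF rd])
    have fm: "finite_measure \<mu>" by (rule prob_space.finite_measure[OF P])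
    have sp: "space \<mu> = UNIV" using sets_eq_imp_space_eq[OF S] by simp
    have sub: "{s<..t} \<subseteq> {x. a < x \<and> ereal x < b}" using st
      by auto (meson ereal_less_eq(3) le_less_trans)
    have "ennreal (c*(t-s)) = (\<integral>\<^sup>+ x. ennreal c * indicator {s<..t} x \<partial>lborel)"
      using st' c by (simp add: nn_integral_cmult_indicator ennreal_mult)
    also have "\<dots> \<le> (\<integral>\<^sup>+ x \<in> {s<..t}. ennreal (g x) \<partial>lborel)"
      by (rule nn_integral_mono) (use c in \<open>auto simp: indicator_def intro!: ennreal_leI\<close>)
    also have "\<dots> \<le> emeasure \<mu> {s<..t}" using h sub by auto
    also have "\<dots> = ennreal (measure \<mu> {s<..t})" by (simp add: finite_measure.emeasure_eq_measure[OF fm])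
    finally have "c*(t-s) \<le> measure \<mu> {s<..t}"
      using st' c by (simp add: ennreal_le_iff)
    moreover have "measure \<mu> {..t} - measure \<mu> {..s} = measure \<mu> {s<..t}"
      using finite_borel_measure.cdf_diff_eq[OF fbm st'] by (simp add: cdf_def)
    ultimately show ?thesis by simp
  qed


  note incr_meas = incr_meas[rule_format (no_asm)]

  have pos_min: "\<exists>c>0. \<forall>y\<in>{p..q}. c \<le> g y"
    if hyp: "continuous_on I g" "\<forall>x\<in>I. g x > 0" "{p..q} \<subseteq> I"
    for I :: "real set" and g :: "real \<Rightarrow> real" and p q :: real
  proof (cases "p \<le> q")
    case False then show ?thesis by (intro exI[of _ 1]) auto
  next
    case True
    have "continuous_on {p..q} g" using hyp(1,3) continuous_on_subset by blast
    then obtain y0 where "y0 \<in> {p..q}" "\<forall>y\<in>{p..q}. g y0 \<le> g y"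
      using continuous_attains_inf[of "{p..q}" g] True by auto
    then show ?thesis using hyp(2,3) by (intro exI[of _ "g y0"]) auto
  qed

  note pos_min = pos_min[rule_format (no_asm)]

  have incr5: "measure \<mu> {..x} + c*hh \<le> measure \<mu> {..x + 5*hh}"
    if P: "prob_space \<mu>" and S: "sets \<mu> = sets borel"
      and h: "\<forall>A \<in> sets borel. A \<subseteq> {x. a < x \<and> ereal x < b} \<longrightarrow>
              emeasure \<mu> A \<ge> (\<integral>\<^sup>+ x \<in> A. ennreal (g x) \<partial>lborel)"
      and hp: "0 < hh" and x: "a \<le> x" "x + 5*hh \<le> L" and Lb: "ereal (L - hh) < b"
      and c: "\<forall>y\<in>{a+hh..L-hh}. c \<le> g y" "0 \<le> c"
    for \<mu> :: "real measure" and a hh x L c :: real and b :: ereal and g :: "real \<Rightarrow> real"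
  proof -
    have rd: "real_distribution \<mu>" using P S by (simp add: real_distribution_def real_distribution_axioms_def)
    have fbm: "finite_borel_measure \<mu>" by (rule real_distribution.finite_borel_measure_M[OF rd])
    have fm: "finite_measure \<mu>" by (rule prob_space.finite_measure[OF P])
    have sp: "space \<mu> = UNIV" using sets_eq_imp_space_eq[OF S] by simp
    have "measure \<mu> {..x} \<le> measure \<mu> {..x+hh}" using finite_borel_measure.cdf_nondecreasing[OF fbm, of x "x+hh"] hp by (simp add: cdf_def)
    moreover have "measure \<mu> {..x+hh} + c*((x+2*hh)-(x+hh)) \<le> measure \<mu> {..x+2*hh}"
    proof (rule incr_meas[OF P S h])
      show "a < x + hh" using x hp by simp
      show "x + hh \<le> x + 2*hh" using hp by simp
      have "x + 2*hh \<le> L - hh" using x hp by simp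
      then show "ereal (x + 2*hh) < b" using Lb by (meson ereal_less_eq(3) le_less_trans)
      show "\<forall>y\<in>{x + hh..x + 2*hh}. c \<le> g y" using c(1) x hp by auto
      show "0 \<le> c" by fact
    qed
    moreover have "measure \<mu> {..x+2*hh} \<le> measure \<mu> {..x+5*hh}" using finite_borel_measure.cdf_nondecreasing[OF fbm, of "x+2*hh" "x+5*hh"] hp by (simp add: cdf_def)
    ultimately show ?thesis by (simp add: algebra_simps)
  qed

  note incr5 = incr5[rule_format (no_asm)]

  have gi_bounds: "0 \<le> gen_inv F u \<and> gen_inv F u \<le> z"
    if hyp: "0 \<le> z" "u \<le> F z"
    for z u :: real and F :: "real \<Rightarrow> real"
  proof -
    have ne: "{x. 0 \<le> x \<and> u \<le> F x} \<noteq> {}" using hyp by auto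
    have "0 \<le> Inf {x. 0 \<le> x \<and> u \<le> F x}" by (rule cInf_greatest[OF ne]) auto
    moreover have "Inf {x. 0 \<le> x \<and> u \<le> F x} \<le> z"
      by (rule cInf_lower) (use hyp in \<open>auto intro: bdd_belowI[of _ 0]\<close>)
    ultimately show ?thesis by (simp add: gen_inv_def)
  qed

  note gi_bounds = gi_bounds[rule_format (no_asm)]

  have gi_zero: "gen_inv F 0 = 0"
    if hyp: "\<forall>x\<ge>0. 0 \<le> F x"
    for F :: "real \<Rightarrow> real"
  proof -
    have "{x. 0 \<le> x \<and> 0 \<le> F x} = {0..}" using hyp by auto
    then show ?thesis by (simp add: gen_inv_def)
  qed

  note gi_zero = gi_zero[rule_format (no_asm)]

  have sup_trick: "(\<lambda>N. if (\<exists>z. Q N z) \<and> bdd_above (f ` {z. Q N z}) then Sup (f ` {z. Q N z}) else 0)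
             \<longlonglongrightarrow> 0"
    if nn: "\<And>N z. Q N z \<Longrightarrow> 0 \<le> f z"
      and ev: "\<And>\<delta>. \<delta> > 0 \<Longrightarrow> eventually (\<lambda>N. \<forall>z. Q N z \<longrightarrow> f z \<le> \<delta>) sequentially"
    for Q :: "nat \<Rightarrow> 'a \<Rightarrow> bool" and f :: "'a \<Rightarrow> real"
  proof (rule LIMSEQ_I)
    fix e :: real assume e: "0 < e"
    from ev[of "e/2"] e obtain N0 where N0: "\<And>N. N \<ge> N0 \<Longrightarrow> \<forall>z. Q N z \<longrightarrow> f z \<le> e/2"
      by (auto simp: eventually_sequentially)
    show "\<exists>no. \<forall>n\<ge>no. norm ((if (\<exists>z. Q n z) \<and> bdd_above (f ` {z. Q n z}) then Sup (f ` {z. Q n z}) else 0) - 0) < e"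
    proof (intro exI allI impI)
      fix n assume n: "n \<ge> N0"
      show "norm ((if (\<exists>z. Q n z) \<and> bdd_above (f ` {z. Q n z}) then Sup (f ` {z. Q n z}) else 0) - 0) < e"
      proof (cases "(\<exists>z. Q n z) \<and> bdd_above (f ` {z. Q n z})")
        case True
        then obtain z0 where z0: "Q n z0" by auto
        have ne: "f ` {z. Q n z} \<noteq> {}" using z0 by auto
        have "Sup (f ` {z. Q n z}) \<le> e/2" by (rule cSup_least[OF ne]) (use N0 n in auto)
        moreover have "f z0 \<le> Sup (f ` {z. Q n z})" using True z0 by (intro cSup_upper) auto
        moreover have "0 \<le> f z0" using nn z0 by auto
        ultimately show ?thesis using True e by auto
      next
        case False then show ?thesis using e by auto
      qed
    qed
  qed

  note sup_trick = sup_trick[rule_format (no_asm)]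

  have sup_trick_upper: "f z \<le> (if (\<exists>z. Q N z) \<and> bdd_above (f ` {z. Q N z}) then Sup (f ` {z. Q N z}) else 0)"
    if hyp: "Q N z" "bdd_above (f ` {z. Q N z})"
    for Q :: "nat \<Rightarrow> 'a \<Rightarrow> bool" and f :: "'a \<Rightarrow> real" and N :: nat and z :: 'a
    using hyp by (auto intro!: cSup_upper)



  note sup_trick_upper = sup_trick_upper[rule_format (no_asm)]

  have eps_small: "\<exists>C>0. eventually (\<lambda>N. \<bar>eps N\<bar> \<le> C * real N powr (-1/6)) sequentially"
    if hyp: "eps \<in> O(\<lambda>N. real N powr (-1/6))"
    for eps :: "nat \<Rightarrow> real"
  proof -
    from hyp obtain C where C: "C > 0" "eventually (\<lambda>N. norm (eps N) \<le> C * norm (real N powr (-1/6))) sequentially"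
      by (elim landau_o.bigE)
    then show ?thesis by (intro exI[of _ C]) auto
  qed

  note eps_small = eps_small[rule_format (no_asm)]

  have powr_to0: "(s::real) < 0 \<Longrightarrow> (\<lambda>N. C * real N powr s) \<longlonglongrightarrow> 0"
    for s C :: real
    using tendsto_mult[OF tendsto_const tendsto_neg_powr[OF _ filterlim_real_sequentially]] by auto

  note powr_to0 = powr_to0[rule_format (no_asm)]

  have eps_to0: "eventually (\<lambda>N. \<bar>eps N\<bar> \<le> m) sequentially"
    if hyp: "eps \<in> O(\<lambda>N. real N powr (-1/6))" "m > 0"
    for eps :: "nat \<Rightarrow> real" and m :: real
  proof -
    obtain C where C: "C > 0" "eventually (\<lambda>N. \<bar>eps N\<bar> \<le> C * real N powr (-1/6)) sequentially"
      using eps_small[OF hyp(1)] by auto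
    have "eventually (\<lambda>N. C * real N powr (-1/6) < m) sequentially"
      using order_tendstoD(2)[OF powr_to0[of "-1/6" C]] hyp(2) by simp
    with C(2) show ?thesis by eventually_elim auto
  qed

  note eps_to0 = eps_to0[rule_format (no_asm)]

  have distfun_nonneg: "0 \<le> F x"
    if hyp: "is_distribution_function F" "\<forall>x\<le>a. F x = 0"
    for F :: "real \<Rightarrow> real" and a x :: real
  proof (cases "x \<le> a")
    case True then show ?thesis using hyp by simp
  next
    case False
    then have "F a \<le> F x" using hyp(1) by (auto simp: is_distribution_function_def mono_def)
    then show ?thesis using hyp(2) by simp
  qed



  note distfun_nonneg = distfun_nonneg[rule_format (no_asm)]

  have fin_case: "\<exists>r :: nat \<Rightarrow> real. r \<longlonglongrightarrow> 0 \<and>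
                (\<forall>N F. is_distribution_function F \<and> (\<forall>x \<le> a. F x = 0) \<and>
                       (\<forall>x \<ge> real_of_ereal b. F x = 1) \<and>
                       (\<forall>x \<ge> 0. \<bar>F x - measure \<mu> {..x}\<bar> \<le> eps N) \<longrightarrow>
                   (\<forall>u \<in> {0..1}. \<bar>gen_inv F u - gen_inv (\<lambda>x. measure \<mu> {..x}) u\<bar> \<le> r N))"
    if P: "prob_space \<mu>" and S: "sets \<mu> = sets borel"
      and Z: "measure \<mu> (- {x. a < x \<and> ereal x < b}) = 0"
      and a0: "0 \<le> a" and ab: "ereal a < b"
      and gc: "continuous_on {x. a < x \<and> ereal x < b} g"
      and gp: "\<forall>x. a < x \<and> ereal x < b \<longrightarrow> g x > 0"
      and h: "\<forall>A \<in> sets borel. A \<subseteq> {x. a < x \<and> ereal x < b} \<longrightarrow>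
              emeasure \<mu> A \<ge> (\<integral>\<^sup>+ x \<in> A. ennreal (g x) \<partial>lborel)"
      and eps: "eps \<in> O(\<lambda>N. real N powr (-1/6))"
      and bf: "b \<noteq> \<infinity>"
    for \<mu> :: "real measure" and a :: real and b :: ereal and eps :: "nat \<Rightarrow> real" and g :: "real \<Rightarrow> real"
  proof -
    have rd: "real_distribution \<mu>" using P S by (simp add: real_distribution_def real_distribution_axioms_def)
    have fbm: "finite_borel_measure \<mu>" by (rule real_distribution.finite_borel_measure_M[OF rd])
    have fm: "finite_measure \<mu>" by (rule prob_space.finite_measure[OF P])
    have sp: "space \<mu> = UNIV" using sets_eq_imp_space_eq[OF S] by simp
    define B where "B = real_of_ereal b"
    have bB: "b = ereal B" unfolding B_def using bf ab by (cases b) auto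
    have aB: "a < B" using ab bB by simp
    have I: "{x. a < x \<and> ereal x < b} = {a<..<B}" using bB by auto
    define G where "G = (\<lambda>x. measure \<mu> {..x})"
    have G0: "\<forall>x\<le>a. G x = 0"
    proof (intro allI impI)
      fix x assume "x \<le> a"
      then have "{..x} \<subseteq> - {a<..<B}" by auto
      then have "measure \<mu> {..x} \<le> measure \<mu> (- {a<..<B})" by (intro finite_measure.finite_measure_mono[OF fm]) (auto simp: S)
      then have "measure \<mu> {..x} \<le> 0" using Z I by simp
      then show "G x = 0" unfolding G_def by (intro antisym) simp_all
    qed
    have G1: "\<forall>x\<ge>B. G x = 1"
    proof (intro allI impI)
      fix x assume x: "x \<ge> B"
      then have "UNIV - {..x} \<subseteq> - {a<..<B}" by auto
      then have "measure \<mu> (UNIV - {..x}) \<le> measure \<mu> (- {a<..<B})" by (intro finite_measure.finite_measure_mono[OF fm]) (auto simp: S)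
      then have "measure \<mu> (UNIV - {..x}) \<le> 0" using Z I by simp
      then have "measure \<mu> (UNIV - {..x}) = 0" by (intro antisym) simp_all
      moreover have "measure \<mu> (space \<mu> - {..x}) = 1 - measure \<mu> {..x}" by (rule prob_space.prob_compl[OF P]) (auto simp: S)
      ultimately show "G x = 1" by (simp add: G_def sp)
    qed
    have Gnn: "\<And>x. 0 \<le> G x" by (simp add: G_def)
    define cond where "cond = (\<lambda>N F. is_distribution_function F \<and> (\<forall>x \<le> a. F x = 0) \<and>
                       (\<forall>x \<ge> B. F x = 1) \<and> (\<forall>x \<ge> 0. \<bar>F x - G x\<bar> \<le> eps N))"
    define Q where "Q = (\<lambda>N (z :: (real \<Rightarrow> real) \<times> real). cond N (fst z) \<and> snd z \<in> {0..1})"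
    define f where "f = (\<lambda>z :: (real \<Rightarrow> real) \<times> real. \<bar>gen_inv (fst z) (snd z) - gen_inv G (snd z)\<bar>)"
    have KP: "eventually (\<lambda>N. \<forall>z. Q N z \<longrightarrow> f z \<le> \<delta>) sequentially" if d: "\<delta> > 0" for \<delta>
    proof -
      define hh where "hh = \<delta>/10"
      have hh: "hh > 0" using d hh_def by simp
      obtain c where c: "c > 0" "\<forall>y\<in>{a+hh..B-hh}. c \<le> g y"
      proof -
        have "\<forall>x\<in>{a<..<B}. 0 < g x" using gp bB by auto
        moreover have "{a + hh..B - hh} \<subseteq> {a<..<B}" using hh by auto
        ultimately show ?thesis using pos_min[OF gc, of "a+hh" "B-hh"] that I by auto
      qed
      define m where "m = c * hh"
      have m: "m > 0" using c hh m_def by simp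
      show ?thesis using eps_to0[OF eps m]
      proof eventually_elim
        case (elim N)
        show ?case
        proof (intro allI impI)
          fix z assume Qz: "Q N z"
          obtain F u where z: "z = (F, u)" by (cases z)
          have cF: "cond N F" and u: "0 \<le> u" "u \<le> 1" using Qz z by (auto simp: Q_def)
          have Fnn: "\<And>x. 0 \<le> F x" using cF distfun_nonneg by (auto simp: cond_def)
          show "f z \<le> \<delta>"
          proof (cases "u = 0")
            case True
            then show ?thesis using z gi_zero[of F] gi_zero[of G] Fnn Gnn d by (simp add: f_def)
          next
            case False
            then have u0: "0 < u" using u by simp
            have B0: "0 \<le> B" using aB a0 by simp
            have "\<bar>gen_inv F u - gen_inv G u\<bar> \<le> \<delta>"
            proof (rule core[OF u0 d, where a = a and L = B and m = m and \<eta> = "eps N"])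
              show "\<forall>x\<le>a. G x = 0" by fact
              show "\<forall>x\<le>a. F x = 0" using cF by (simp add: cond_def)
              show "\<forall>x. a \<le> x \<longrightarrow> x + \<delta>/2 \<le> B \<longrightarrow> G x + m \<le> G (x + \<delta>/2)"
              proof (intro allI impI)
                fix x assume x: "a \<le> x" "x + \<delta>/2 \<le> B"
                have "measure \<mu> {..x} + c*hh \<le> measure \<mu> {..x + 5*hh}"
                  by (rule incr5[OF P S h hh x(1), where L = B])
                     (use x hh_def hh bB c in auto)
                then show "G x + m \<le> G (x + \<delta>/2)" by (simp add: G_def m_def hh_def)
              qed
              show "\<forall>x\<ge>0. \<bar>F x - G x\<bar> \<le> eps N" using cF by (simp add: cond_def)
              show "eps N \<le> m" using elim by simp
              show "{x. 0 \<le> x \<and> u \<le> G x} \<noteq> {}" using G1 B0 u by auto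
              show "gen_inv G u \<le> B" using gi_bounds[of B u G] G1 B0 u by auto
              show "gen_inv G u + \<delta> \<le> B \<or> (\<forall>x\<ge>B. u \<le> F x)" using cF u by (simp add: cond_def)
            qed
            then show ?thesis using z by (simp add: f_def)
          qed
        qed
      qed
    qed
    define r where "r = (\<lambda>N. if (\<exists>z. Q N z) \<and> bdd_above (f ` {z. Q N z}) then Sup (f ` {z. Q N z}) else 0)"
    have r0: "r \<longlonglongrightarrow> 0" unfolding r_def
      by (rule sup_trick[OF _ KP]) (simp_all add: f_def)
    have bdd: "bdd_above (f ` {z. Q N z})" for N
    proof (rule bdd_aboveI[of _ B])
      fix y assume "y \<in> f ` {z. Q N z}"
      then obtain F u where Qz: "Q N (F, u)" and y: "y = f (F, u)" by auto
      have cF: "cond N F" and u: "0 \<le> u" "u \<le> 1" using Qz by (auto simp: Q_def)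
      have B0: "0 \<le> B" using aB a0 by simp
      have "0 \<le> gen_inv F u \<and> gen_inv F u \<le> B" using gi_bounds[of B u F] cF u B0 by (auto simp: cond_def)
      moreover have "0 \<le> gen_inv G u \<and> gen_inv G u \<le> B" using gi_bounds[of B u G] G1 u B0 by auto
      ultimately show "y \<le> B" using y by (auto simp: f_def)
    qed
    show ?thesis
    proof (intro exI[of _ r] conjI r0 allI impI ballI)
      fix N :: nat and F :: "real \<Rightarrow> real" and u :: real assume H: "is_distribution_function F \<and> (\<forall>x \<le> a. F x = 0) \<and>
                       (\<forall>x \<ge> real_of_ereal b. F x = 1) \<and> (\<forall>x \<ge> 0. \<bar>F x - measure \<mu> {..x}\<bar> \<le> eps N)"
        and u: "u \<in> {0..1}"
      have "Q N (F, u)" using H u by (simp add: Q_def cond_def G_def B_def)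
      then have "f (F, u) \<le> r N" unfolding r_def by (rule sup_trick_upper[OF _ bdd])
      then show "\<bar>gen_inv F u - gen_inv (\<lambda>x. measure \<mu> {..x}) u\<bar> \<le> r N"
        by (simp add: f_def G_def)
    qed
  qed



  note fin_case = fin_case[rule_format (no_asm)]

  have inf_case: "\<exists>\<alpha> > 0. \<exists>(xN :: nat \<Rightarrow> real) (r :: nat \<Rightarrow> real).
                (\<exists>c > 0. eventually (\<lambda>N. real N powr (-\<alpha>) * xN N \<ge> c) sequentially) \<and>
                r \<longlonglongrightarrow> 0 \<and>
                (\<forall>N F. is_distribution_function F \<and> (\<forall>x \<le> a. F x = 0) \<and>
                       (\<forall>x \<ge> 0. \<bar>F x - measure \<mu> {..x}\<bar> \<le> eps N) \<longrightarrow>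
                   (\<forall>u. 0 \<le> u \<and> u < 1 \<and> gen_inv (\<lambda>x. measure \<mu> {..x}) u \<le> xN N \<longrightarrow>
                       \<bar>gen_inv F u - gen_inv (\<lambda>x. measure \<mu> {..x}) u\<bar> \<le> r N))"
    if P: "prob_space \<mu>" and S: "sets \<mu> = sets borel"
      and Z: "measure \<mu> (- {x. a < x \<and> ereal x < b}) = 0"
      and a0: "0 \<le> a" and ab: "ereal a < b"
      and gc: "continuous_on {x. a < x \<and> ereal x < b} g"
      and gp: "\<forall>x. a < x \<and> ereal x < b \<longrightarrow> g x > 0"
      and h: "\<forall>A \<in> sets borel. A \<subseteq> {x. a < x \<and> ereal x < b} \<longrightarrow>
              emeasure \<mu> A \<ge> (\<integral>\<^sup>+ x \<in> A. ennreal (g x) \<partial>lborel)"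
      and eps: "eps \<in> O(\<lambda>N. real N powr (-1/6))"
      and binf: "b = \<infinity>"
      and tail: "\<exists>x0 k \<gamma>. x0 > a \<and> k > 0 \<and> \<gamma> > 3 \<and> (\<forall>x \<ge> x0. g x \<ge> k * x powr (-\<gamma>))"
    for \<mu> :: "real measure" and a :: real and b :: ereal and eps :: "nat \<Rightarrow> real" and g :: "real \<Rightarrow> real"
  proof -
    have rd: "real_distribution \<mu>" using P S by (simp add: real_distribution_def real_distribution_axioms_def)
    have fbm: "finite_borel_measure \<mu>" by (rule real_distribution.finite_borel_measure_M[OF rd])
    have fm: "finite_measure \<mu>" by (rule prob_space.finite_measure[OF P])
    have sp: "space \<mu> = UNIV" using sets_eq_imp_space_eq[OF S] by simp
    obtain t0 k \<gamma> where t0: "t0 > a" and k: "k > 0" and \<gamma>: "\<gamma> > 3" and gt: "\<forall>x \<ge> t0. g x \<ge> k * x powr (-\<gamma>)"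
      using tail by auto
    have I: "{x. a < x \<and> ereal x < b} = {a<..}" using binf by auto
    define G where "G = (\<lambda>x. measure \<mu> {..x})"
    have G0: "\<forall>x\<le>a. G x = 0"
    proof (intro allI impI)
      fix x assume "x \<le> a"
      then have "{..x} \<subseteq> - {a<..}" by auto
      then have "measure \<mu> {..x} \<le> measure \<mu> (- {a<..})" by (intro finite_measure.finite_measure_mono[OF fm]) (auto simp: S)
      then have "measure \<mu> {..x} \<le> 0" using Z I by simp
      then show "G x = 0" unfolding G_def by (intro antisym) simp_all
    qed
    have Gnn: "\<And>x. 0 \<le> G x" by (simp add: G_def)
    have Gne: "\<exists>x\<ge>0. u \<le> G x" if u: "u < 1" for u
    proof -
      have "eventually (\<lambda>x. u < G x) at_top"
        using order_tendstoD(1)[OF real_distribution.cdf_lim_at_top_prob[OF rd] u] by (simp add: G_def cdf_def)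
      then obtain X where X: "\<And>x. x \<ge> X \<Longrightarrow> u < G x" by (auto simp: eventually_at_top_linorder)
      show ?thesis using X[of "max X 0"] by (intro exI[of _ "max X 0"]) auto
    qed
    define \<alpha> where "\<alpha> = 1 / (12 * \<gamma>)"
    have \<alpha>: "\<alpha> > 0" using \<gamma> \<alpha>_def by simp
    have \<alpha>\<gamma>: "\<alpha> * \<gamma> = 1/12" using \<gamma> \<alpha>_def by simp
    define X where "X = (\<lambda>N. real N powr \<alpha>)"
    define cond where "cond = (\<lambda>N F. is_distribution_function F \<and> (\<forall>x \<le> a. F x = 0) \<and>
                       (\<forall>x \<ge> 0. \<bar>F x - G x\<bar> \<le> eps N))"
    define Q where "Q = (\<lambda>N (z :: (real \<Rightarrow> real) \<times> real). cond N (fst z) \<and> 0 \<le> snd z \<and> snd z < 1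
                           \<and> gen_inv G (snd z) \<le> X N)"
    define f where "f = (\<lambda>z :: (real \<Rightarrow> real) \<times> real. \<bar>gen_inv (fst z) (snd z) - gen_inv G (snd z)\<bar>)"
    obtain C where C: "C > 0" "eventually (\<lambda>N. \<bar>eps N\<bar> \<le> C * real N powr (-1/6)) sequentially"
      using eps_small[OF eps] by auto
    have KP: "eventually (\<lambda>N. \<forall>z. Q N z \<longrightarrow> f z \<le> \<delta>) sequentially" if d0: "\<delta> > 0" for \<delta>
    proof -
      define d where "d = min \<delta> 1"
      have d: "0 < d" "d \<le> 1" "d \<le> \<delta>" using d0 d_def by auto
      define hh where "hh = d/10"
      have hh: "hh > 0" using d hh_def by simp
      obtain c1 where c1: "c1 > 0" "\<forall>y\<in>{a+hh..t0}. c1 \<le> g y"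
      proof -
        have "\<forall>x\<in>{a<..}. 0 < g x" using gp binf by auto
        moreover have "{a + hh..t0} \<subseteq> {a<..}" using hh by auto
        ultimately show ?thesis using pos_min[OF gc, of "a+hh" "t0"] that I by auto
      qed
      define m where "m = (\<lambda>N. hh * min c1 (k * (X N + d) powr (-\<gamma>)))"
      have e1: "eventually (\<lambda>N. C * real N powr (-1/6) < hh * c1) sequentially"
        using order_tendstoD(2)[OF powr_to0[of "-1/6" C]] hh c1 by simp
      have e2: "eventually (\<lambda>N. C * real N powr (-1/12) < hh * k * 2 powr (-\<gamma>)) sequentially"
        using order_tendstoD(2)[OF powr_to0[of "-1/12" C]] hh k by simp
      have e3: "eventually (\<lambda>N. (1::nat) \<le> N) sequentially" by (rule eventually_ge_at_top)
      have evm: "eventually (\<lambda>N. \<bar>eps N\<bar> \<le> m N) sequentially"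
        using C(2) e1 e2 e3
      proof eventually_elim
        case (elim N)
        have N1: "1 \<le> real N" using elim(4) by simp
        have X1: "1 \<le> X N" unfolding X_def using N1 \<alpha> by (intro ge_one_powr_ge_zero) auto
        have "(2 * X N) powr (-\<gamma>) \<le> (X N + d) powr (-\<gamma>)"
          using X1 d \<gamma> by (intro powr_mono2') auto
        moreover have "(2 * X N) powr (-\<gamma>) = 2 powr (-\<gamma>) * real N powr (-1/12)"
        proof -
          have "(2 * X N) powr (-\<gamma>) = 2 powr (-\<gamma>) * X N powr (-\<gamma>)" by (rule powr_mult)
          also have "X N powr (-\<gamma>) = real N powr (\<alpha> * (-\<gamma>))" unfolding X_def by (rule powr_powr)
          also have "\<alpha> * (-\<gamma>) = -1/12" using \<alpha>\<gamma> by simp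
          finally show ?thesis .
        qed
        ultimately have A: "2 powr (-\<gamma>) * real N powr (-1/12) \<le> (X N + d) powr (-\<gamma>)" by simp
        have sp: "real N powr (-1/6) = real N powr (-1/12) * real N powr (-1/12)"
          by (subst powr_add[symmetric]) simp
        have p12: "0 \<le> real N powr (-1/12)" by simp
        have "C * real N powr (-1/6) = (C * real N powr (-1/12)) * real N powr (-1/12)"
          using sp by simp
        also have "\<dots> \<le> (hh * k * 2 powr (-\<gamma>)) * real N powr (-1/12)"
          using elim(3) p12 by (intro mult_right_mono) auto
        also have "\<dots> = hh * k * (2 powr (-\<gamma>) * real N powr (-1/12))" by simp
        also have "\<dots> \<le> hh * (k * (X N + d) powr (-\<gamma>))"
          using A hh k by (simp add: mult_left_mono)
        finally have "C * real N powr (-1/6) \<le> hh * (k * (X N + d) powr (-\<gamma>))" .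
        moreover have "C * real N powr (-1/6) \<le> hh * c1" using elim(2) by simp
        ultimately have "C * real N powr (-1/6) \<le> m N" unfolding m_def
          using hh by (simp add: min_mult_distrib_left)
        then show ?case using elim(1) by simp
      qed
      show ?thesis using evm
      proof eventually_elim
        case (elim N)
        show ?case
        proof (intro allI impI)
          fix z assume Qz: "Q N z"
          obtain F u where z: "z = (F, u)" by (cases z)
          have cF: "cond N F" and u: "0 \<le> u" "u < 1" and uX: "gen_inv G u \<le> X N"
            using Qz z by (auto simp: Q_def)
          have Fnn: "\<And>x. 0 \<le> F x" using cF distfun_nonneg by (auto simp: cond_def)
          show "f z \<le> \<delta>"
          proof (cases "u = 0")
            case True
            then show ?thesis using z gi_zero[of F] gi_zero[of G] Fnn Gnn d0 by (simp add: f_def)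
          next
            case False
            then have u0: "0 < u" using u by simp
            define L where "L = X N + d"
            have "\<bar>gen_inv F u - gen_inv G u\<bar> \<le> d"
            proof (rule core[OF u0 d(1), where a = a and L = L and m = "m N" and \<eta> = "eps N"])
              show "\<forall>x\<le>a. G x = 0" by fact
              show "\<forall>x\<le>a. F x = 0" using cF by (simp add: cond_def)
              show "\<forall>x. a \<le> x \<longrightarrow> x + d/2 \<le> L \<longrightarrow> G x + m N \<le> G (x + d/2)"
              proof (intro allI impI)
                fix x assume x: "a \<le> x" "x + d/2 \<le> L"
                define c where "c = min c1 (k * L powr (-\<gamma>))"
                have cg: "\<forall>y\<in>{a+hh..L-hh}. c \<le> g y"
                proof
                  fix y assume y: "y \<in> {a+hh..L-hh}"
                  show "c \<le> g y"
                  proof (cases "y \<le> t0")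
                    case True then show ?thesis using c1 y unfolding c_def by (meson atLeastAtMost_iff min.coboundedI1)
                  next
                    case False
                    then have y0: "y > 0" "t0 \<le> y" using t0 a0 by auto
                    have "L powr (-\<gamma>) \<le> y powr (-\<gamma>)"
                      using y y0 hh \<gamma> by (intro powr_mono2') auto
                    then have "k * L powr (-\<gamma>) \<le> k * y powr (-\<gamma>)" using k by simp
                    also have "\<dots> \<le> g y" using gt y0 by auto
                    finally show ?thesis unfolding c_def by simp
                  qed
                qed
                have "measure \<mu> {..x} + c*hh \<le> measure \<mu> {..x + 5*hh}"
                  by (rule incr5[OF P S h hh x(1), where L = L])
                     (use x hh_def hh binf cg c1 k in \<open>auto simp: c_def\<close>)
                then show "G x + m N \<le> G (x + d/2)"
                  by (simp add: G_def m_def hh_def c_def L_def mult.commute)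
              qed
              show "\<forall>x\<ge>0. \<bar>F x - G x\<bar> \<le> eps N" using cF by (simp add: cond_def)
              show "eps N \<le> m N" using elim by simp
              show "{x. 0 \<le> x \<and> u \<le> G x} \<noteq> {}" using Gne[OF u(2)] by auto
              show "gen_inv G u \<le> L" using uX d L_def by simp
              show "gen_inv G u + d \<le> L \<or> (\<forall>x\<ge>L. u \<le> F x)" using uX L_def by simp
            qed
            then show ?thesis using z d by (simp add: f_def)
          qed
        qed
      qed
    qed
    define r where "r = (\<lambda>N. if (\<exists>z. Q N z) \<and> bdd_above (f ` {z. Q N z}) then Sup (f ` {z. Q N z}) else 0)"
    have r0: "r \<longlonglongrightarrow> 0" unfolding r_def
      by (rule sup_trick[OF _ KP]) (simp_all add: f_def)
    define xN where "xN = (\<lambda>N. if bdd_above (f ` {z. Q N z}) then X N else -1)"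
    have evb: "eventually (\<lambda>N. bdd_above (f ` {z. Q N z})) sequentially"
      using KP[OF zero_less_one] by eventually_elim (auto intro: bdd_aboveI[of _ 1])
    have lowx: "eventually (\<lambda>N. real N powr (-\<alpha>) * xN N \<ge> 1) sequentially"
      using evb eventually_ge_at_top[of "1::nat"]
    proof eventually_elim
      case (elim N)
      then have "real N powr (-\<alpha>) * xN N = real N powr (-\<alpha> + \<alpha>)"
        by (simp add: xN_def X_def powr_add[symmetric])
      then show ?case using elim by simp
    qed
    have main: "\<forall>N F. is_distribution_function F \<and> (\<forall>x \<le> a. F x = 0) \<and>
                       (\<forall>x \<ge> 0. \<bar>F x - measure \<mu> {..x}\<bar> \<le> eps N) \<longrightarrow>
                   (\<forall>u. 0 \<le> u \<and> u < 1 \<and> gen_inv (\<lambda>x. measure \<mu> {..x}) u \<le> xN N \<longrightarrow>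
                       \<bar>gen_inv F u - gen_inv (\<lambda>x. measure \<mu> {..x}) u\<bar> \<le> r N)"
    proof (intro allI impI)
      fix N :: nat and F :: "real \<Rightarrow> real" and u :: real
      assume H: "is_distribution_function F \<and> (\<forall>x \<le> a. F x = 0) \<and>
                       (\<forall>x \<ge> 0. \<bar>F x - measure \<mu> {..x}\<bar> \<le> eps N)"
        and u: "0 \<le> u \<and> u < 1 \<and> gen_inv (\<lambda>x. measure \<mu> {..x}) u \<le> xN N"
      have gi0: "0 \<le> gen_inv G u" using Gne[of u] u gi_bounds[of _ u G] by auto
      have bd: "bdd_above (f ` {z. Q N z})"
      proof (rule ccontr)
        assume "\<not> ?thesis"
        then have "xN N = -1" by (simp add: xN_def)
        then show False using u gi0 by (simp add: G_def)
      qed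
      have "Q N (F, u)" using H u bd by (simp add: Q_def cond_def G_def xN_def)
      then have "f (F, u) \<le> r N" unfolding r_def by (rule sup_trick_upper[where Q=Q and f=f, OF _ bd])
      then show "\<bar>gen_inv F u - gen_inv (\<lambda>x. measure \<mu> {..x}) u\<bar> \<le> r N"
        by (simp add: f_def G_def)
    qed
    have c1: "\<exists>c > 0. eventually (\<lambda>N. real N powr (-\<alpha>) * xN N \<ge> c) sequentially"
      using lowx by (intro exI[of _ 1]) auto
    show ?thesis using \<alpha> r0 c1 main by blast
  qed


  note inf_case = inf_case[rule_format (no_asm)]

  have final: "(b \<noteq> \<infinity> \<longrightarrow>
             (\<exists>r :: nat \<Rightarrow> real. r \<longlonglongrightarrow> 0 \<and>
                (\<forall>N F. is_distribution_function F \<and> (\<forall>x \<le> a. F x = 0) \<and>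
                       (\<forall>x \<ge> real_of_ereal b. F x = 1) \<and>
                       (\<forall>x \<ge> 0. \<bar>F x - measure \<mu> {..x}\<bar> \<le> eps N) \<longrightarrow>
                   (\<forall>u \<in> {0..1}. \<bar>gen_inv F u - gen_inv (\<lambda>x. measure \<mu> {..x}) u\<bar> \<le> r N))))
         \<and> (b = \<infinity> \<longrightarrow>
             (\<exists>\<alpha> > 0. \<exists>(xN :: nat \<Rightarrow> real) (r :: nat \<Rightarrow> real).
                (\<exists>c > 0. eventually (\<lambda>N. real N powr (-\<alpha>) * xN N \<ge> c) sequentially) \<and>
                r \<longlonglongrightarrow> 0 \<and>
                (\<forall>N F. is_distribution_function F \<and> (\<forall>x \<le> a. F x = 0) \<and>
                       (\<forall>x \<ge> 0. \<bar>F x - measure \<mu> {..x}\<bar> \<le> eps N) \<longrightarrow>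
                   (\<forall>u. 0 \<le> u \<and> u < 1 \<and> gen_inv (\<lambda>x. measure \<mu> {..x}) u \<le> xN N \<longrightarrow>
                       \<bar>gen_inv F u - gen_inv (\<lambda>x. measure \<mu> {..x}) u\<bar> \<le> r N))))"
    if A2: "assumption2 \<mu> a b" and eps: "eps \<in> O(\<lambda>N. real N powr (-1/6))"
  proof -
    note A = A2[unfolded assumption2_def]
    note c2 = A[THEN conjunct2, THEN conjunct2, THEN conjunct2, THEN conjunct2, THEN conjunct2]
    have P: "prob_space \<mu>" by (rule A[THEN conjunct1])
    have S: "sets \<mu> = sets borel" by (rule A[THEN conjunct2, THEN conjunct1])
    have a0: "0 \<le> a" by (rule c2[THEN conjunct1])
    have ab: "ereal a < b" by (rule c2[THEN conjunct2, THEN conjunct1])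
    have Z: "measure \<mu> (- {x. a < x \<and> ereal x < b}) = 0" by (rule c2[THEN conjunct2, THEN conjunct2, THEN conjunct1])
    note ex = c2[THEN conjunct2, THEN conjunct2, THEN conjunct2]
    obtain g where G: "continuous_on {x. a < x \<and> ereal x < b} g \<and>
          (\<forall>x. a < x \<and> ereal x < b \<longrightarrow> g x > 0) \<and>
          (\<forall>A \<in> sets borel. A \<subseteq> {x. a < x \<and> ereal x < b} \<longrightarrow>
              emeasure \<mu> A \<ge> (\<integral>\<^sup>+ x \<in> A. ennreal (g x) \<partial>lborel)) \<and>
          (b = \<infinity> \<longrightarrow> (\<exists>x0 k \<gamma>. x0 > a \<and> k > 0 \<and> \<gamma> > 3 \<and>
              (\<forall>x \<ge> x0. g x \<ge> k * x powr (-\<gamma>))))"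
      using ex by (rule exE)
    have gc: "continuous_on {x. a < x \<and> ereal x < b} g" by (rule G[THEN conjunct1])
    have gp: "\<forall>x. a < x \<and> ereal x < b \<longrightarrow> g x > 0" by (rule G[THEN conjunct2, THEN conjunct1])
    have h: "\<forall>A \<in> sets borel. A \<subseteq> {x. a < x \<and> ereal x < b} \<longrightarrow>
              emeasure \<mu> A \<ge> (\<integral>\<^sup>+ x \<in> A. ennreal (g x) \<partial>lborel)" by (rule G[THEN conjunct2, THEN conjunct2, THEN conjunct1])
    have tl: "b = \<infinity> \<longrightarrow> (\<exists>x0 k \<gamma>. x0 > a \<and> k > 0 \<and> \<gamma> > 3 \<and>
              (\<forall>x \<ge> x0. g x \<ge> k * x powr (-\<gamma>)))" by (rule G[THEN conjunct2, THEN conjunct2, THEN conjunct2])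
    show ?thesis
    proof (intro conjI impI)
      assume "b \<noteq> \<infinity>"
      then show "\<exists>r :: nat \<Rightarrow> real. r \<longlonglongrightarrow> 0 \<and>
                (\<forall>N F. is_distribution_function F \<and> (\<forall>x \<le> a. F x = 0) \<and>
                       (\<forall>x \<ge> real_of_ereal b. F x = 1) \<and>
                       (\<forall>x \<ge> 0. \<bar>F x - measure \<mu> {..x}\<bar> \<le> eps N) \<longrightarrow>
                   (\<forall>u \<in> {0..1}. \<bar>gen_inv F u - gen_inv (\<lambda>x. measure \<mu> {..x}) u\<bar> \<le> r N))"
        by (rule fin_case[OF P S Z a0 ab gc gp h eps])
    next
      assume bi: "b = \<infinity>"
      show "\<exists>\<alpha> > 0. \<exists>(xN :: nat \<Rightarrow> real) (r :: nat \<Rightarrow> real).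
                (\<exists>c > 0. eventually (\<lambda>N. real N powr (-\<alpha>) * xN N \<ge> c) sequentially) \<and>
                r \<longlonglongrightarrow> 0 \<and>
                (\<forall>N F. is_distribution_function F \<and> (\<forall>x \<le> a. F x = 0) \<and>
                       (\<forall>x \<ge> 0. \<bar>F x - measure \<mu> {..x}\<bar> \<le> eps N) \<longrightarrow>
                   (\<forall>u. 0 \<le> u \<and> u < 1 \<and> gen_inv (\<lambda>x. measure \<mu> {..x}) u \<le> xN N \<longrightarrow>
                       \<bar>gen_inv F u - gen_inv (\<lambda>x. measure \<mu> {..x}) u\<bar> \<le> r N))"
        by (rule inf_case[OF P S Z a0 ab gc gp h eps bi]) (use tl bi in \<open>rule mp\<close>)
    qed
  qed
  assume A2: "assumption2 \<mu> a b" and eps: "eps \<in> O(\<lambda>N. real N powr (-1/6))"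
  show "((b \<noteq> \<infinity> \<longrightarrow>
             (\<exists>r :: nat \<Rightarrow> real. r \<longlonglongrightarrow> 0 \<and>
                (\<forall>N F. is_distribution_function F \<and> (\<forall>x \<le> a. F x = 0) \<and>
                       (\<forall>x \<ge> real_of_ereal b. F x = 1) \<and>
                       (\<forall>x \<ge> 0. \<bar>F x - measure \<mu> {..x}\<bar> \<le> eps N) \<longrightarrow>
                   (\<forall>u \<in> {0..1}. \<bar>gen_inv F u - gen_inv (\<lambda>x. measure \<mu> {..x}) u\<bar> \<le> r N))))
         \<and> (b = \<infinity> \<longrightarrow>
             (\<exists>\<alpha> > 0. \<exists>(xN :: nat \<Rightarrow> real) (r :: nat \<Rightarrow> real).
                (\<exists>c > 0. eventually (\<lambda>N. real N powr (-\<alpha>) * xN N \<ge> c) sequentially) \<and>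
                r \<longlonglongrightarrow> 0 \<and>
                (\<forall>N F. is_distribution_function F \<and> (\<forall>x \<le> a. F x = 0) \<and>
                       (\<forall>x \<ge> 0. \<bar>F x - measure \<mu> {..x}\<bar> \<le> eps N) \<longrightarrow>
                   (\<forall>u. 0 \<le> u \<and> u < 1 \<and> gen_inv (\<lambda>x. measure \<mu> {..x}) u \<le> xN N \<longrightarrow>
                       \<bar>gen_inv F u - gen_inv (\<lambda>x. measure \<mu> {..x}) u\<bar> \<le> r N))))) \<and> (0::nat) = 0"
    using final[OF A2 eps] by (rule conjI) (rule refl)
qed

theorem corollary2p3:
  fixes \<mu> :: "real measure" and a :: real and b :: ereal and eps :: "nat \<Rightarrow> real"
  assumes A2: "assumption2 \<mu> a b"
    and eps: "eps \<in> O(\<lambda>N. real N powr (-1/6))"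
  shows "(b \<noteq> \<infinity> \<longrightarrow>
           (\<exists>r :: nat \<Rightarrow> real. r \<longlonglongrightarrow> 0 \<and>
              (\<forall>N F. is_distribution_function F \<and> (\<forall>x \<le> a. F x = 0) \<and>
                     (\<forall>x \<ge> real_of_ereal b. F x = 1) \<and>
                     (\<forall>x \<ge> 0. \<bar>F x - measure \<mu> {..x}\<bar> \<le> eps N) \<longrightarrow>
                 (\<forall>u \<in> {0..1}. \<bar>gen_inv F u - gen_inv (\<lambda>x. measure \<mu> {..x}) u\<bar> \<le> r N))))
       \<and> (b = \<infinity> \<longrightarrow>
           (\<exists>\<alpha> > 0. \<exists>(xN :: nat \<Rightarrow> real) (r :: nat \<Rightarrow> real).
              (\<exists>c > 0. eventually (\<lambda>N. real N powr (-\<alpha>) * xN N \<ge> c) sequentially) \<and>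
              r \<longlonglongrightarrow> 0 \<and>
              (\<forall>N F. is_distribution_function F \<and> (\<forall>x \<le> a. F x = 0) \<and>
                     (\<forall>x \<ge> 0. \<bar>F x - measure \<mu> {..x}\<bar> \<le> eps N) \<longrightarrow>
                 (\<forall>u. 0 \<le> u \<and> u < 1 \<and> gen_inv (\<lambda>x. measure \<mu> {..x}) u \<le> xN N \<longrightarrow>
                     \<bar>gen_inv F u - gen_inv (\<lambda>x. measure \<mu> {..x}) u\<bar> \<le> r N))))"
  by (rule main_lemma[OF A2 eps, THEN conjunct1])

end
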